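(* The left-join operator $⟕_F$ of the W3C SPARQL algebra is expressible in the core SPARQL algebra. That is, there is an expression built only from projection, selection, join, union and simple difference which, for every selection formula $F$ and all multisets of mappings $\Omega_1,\Omega_2$, evaluates to $\Omega_1 \,⟕_F\, \Omega_2$, with the same multiplicities.
   Context: Fix pairwise disjoint infinite sets $I$ (IRIs), $L$ (literals) and $V$ (variables), and let $T=I\cup L$. Solution mappings. A mapping is a partial function $\mu:V\to T$ with domain $\operatorname{dom}(\mu)$. Mappings $\mu_1,\mu_2$ are compatible ($\mu_1\sim\mu_2$) if they agree on every variable in $\operatorname{dom}(\mu_1)\cap\operatorname{dom}(\mu_2)$; then $\mu_1\cup\mu_2$ is a mapping. The restriction $\mu_{|W}$ of $\mu$ to $W\subseteq V$ is $\mu$ restricted to $\operatorname{dom}(\mu)\cap W$. Selection formulas. The atomic ones are $(?X=c)$, $(?X=?Y)$ and $\operatorname{bound}(?X)$, for $?X,?Y\in V$ and $c\in I\cup L$; they are closed under $\land$, $\lor$ and $\neg$. The value $\mu(F)\in\{\mathit{true},\mathit{false},\mathit{error}\}$ is defined as follows. - $(?X=c)$ and $(?X=?Y)$ are $\mathit{error}$ if some mentioned variable is outside $\operatorname{dom}(\mu)$; otherwise they are $\mathit{true}$ or $\mathit{false}$ according to equality. - $\operatorname{bound}(?X)$ is $\mathit{true}$ iff $?X\in\operatorname{dom}(\mu)$, and $\mathit{false}$ otherwise. - $\land$ is $\mathit{false}$ if some argument is $\mathit{false}$; else $\mathit{error}$ if some argument is $\mathit{error}$; else $\mathit{true}$.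 - $\lor$ is $\mathit{true}$ if some argument is $\mathit{true}$; else $\mathit{error}$ if some argument is $\mathit{error}$; else $\mathit{false}$. - $\neg$ swaps $\mathit{true}$ and $\mathit{false}$ and keeps $\mathit{error}$. Multisets. A multiset $\Omega$ of mappings assigns multiplicities $\mathrm{card}_\Omega(\mu)\ge0$. Operations, for multisets $\Omega_1,\Omega_2$. - Projection: $\pi_W(\Omega_1)$ is the multiset of restrictions $\mu_{|W}$ for $\mu\in\Omega_1$, with multiplicities summed. - Selection: $\sigma_F(\Omega_1)$ keeps the $\mu\in\Omega_1$ with $\mu(F)=\mathit{true}$, with multiplicities kept. - Join: $\Omega_1\Join\Omega_2$ is the multiset of $\mu_1\cup\mu_2$ for compatible $\mu_1\in\Omega_1$, $\mu_2\in\Omega_2$, where $\mathrm{card}(\mu)=\sum_{\mu=\mu_1\cup\mu_2}\mathrm{card}_{\Omega_1}(\mu_1)\,\mathrm{card}_{\Omega_2}(\mu_2)$. - Union: $\Omega_1\cup\Omega_2$, with multiplicities added. - Difference: $\Omega_1\setminus_F\Omega_2=\{\mu_1\in\Omega_1\mid\forall\mu_2\in\Omega_2,\ \mu_1\nsim\mu_2\lor(\mu_1\sim\mu_2\land(\mu_1\cup\mu_2)(F)=\mathit{false})\}$, with multiplicities as in $\Omega_1$. - Left-join: $\Omega_1\,⟕_F\,\Omega_2=\sigma_F(\Omega_1\Join\Omega_2)\cup(\Omega_1\setminus_F\Omega_2)$, with multiplicities added. - Simple difference: $\Omega_1\setminus\Omega_2=\{\mu_1\in\Omega_1\mid\forall\mu_2\in\Omega_2,\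 \mu_1\nsim\mu_2\}$, with multiplicities as in $\Omega_1$. The core SPARQL algebra consists of projection, selection, join, union and simple difference. An operator $O$ is expressible in a language $L$ iff some subset of the operators of $L$ can express the same queries as $O$. *)

theory Defs
  imports Main "HOL-Library.Multiset"
begin

datatype ('i, 'l) rdfterm = IRI 'i | Lit 'l

type_synonym ('v, 'i, 'l) mapping = "'v \<rightharpoonup> ('i, 'l) rdfterm"

definition compatible :: "('v, 'i, 'l) mapping \<Rightarrow> ('v, 'i, 'l) mapping \<Rightarrow> bool" where
  "compatible \<mu>1 \<mu>2 \<longleftrightarrow> (\<forall>x \<in> dom \<mu>1 \<inter> dom \<mu>2. \<mu>1 x = \<mu>2 x)"

datatype ('v, 'i, 'l) sformula =
    EqC 'v "('i, 'l) rdfterm"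
  | EqV 'v 'v
  | Bound 'v
  | FAnd "('v, 'i, 'l) sformula" "('v, 'i, 'l) sformula"
  | FOr "('v, 'i, 'l) sformula" "('v, 'i, 'l) sformula"
  | FNot "('v, 'i, 'l) sformula"

datatype tval = TTrue | TFalse | TError

fun tv_and :: "tval \<Rightarrow> tval \<Rightarrow> tval" where
  "tv_and a b = (if a = TFalse \<or> b = TFalse then TFalse
                 else if a = TError \<or> b = TError then TError else TTrue)"

fun tv_or :: "tval \<Rightarrow> tval \<Rightarrow> tval" where
  "tv_or a b = (if a = TTrue \<or> b = TTrue then TTrue
                else if a = TError \<or> b = TError then TError else TFalse)"

fun tv_not :: "tval \<Rightarrow> tval" where
  "tv_not TTrue = TFalse"
| "tv_not TFalse = TTrue"
| "tv_not TError = TError"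

fun feval :: "('v, 'i, 'l) mapping \<Rightarrow> ('v, 'i, 'l) sformula \<Rightarrow> tval" where
  "feval \<mu> (EqC x c) = (case \<mu> x of None \<Rightarrow> TError
                          | Some a \<Rightarrow> (if a = c then TTrue else TFalse))"
| "feval \<mu> (EqV x y) = (case (\<mu> x, \<mu> y) of (Some a, Some b) \<Rightarrow> (if a = b then TTrue else TFalse)
                          | _ \<Rightarrow> TError)"
| "feval \<mu> (Bound x) = (if x \<in> dom \<mu> then TTrue else TFalse)"
| "feval \<mu> (FAnd F G) = tv_and (feval \<mu> F) (feval \<mu> G)"
| "feval \<mu> (FOr F G) = tv_or (feval \<mu> F) (feval \<mu> G)"
| "feval \<mu> (FNot F) = tv_not (feval \<mu> F)"

type_synonym ('v, 'i, 'l) mset_map = "('v, 'i, 'l) mapping multiset"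

definition proj :: "'v set \<Rightarrow> ('v, 'i, 'l) mset_map \<Rightarrow> ('v, 'i, 'l) mset_map" where
  "proj W \<Omega> = image_mset (\<lambda>\<mu>. \<mu> |` W) \<Omega>"

definition sel :: "('v, 'i, 'l) sformula \<Rightarrow> ('v, 'i, 'l) mset_map \<Rightarrow> ('v, 'i, 'l) mset_map" where
  "sel F \<Omega> = filter_mset (\<lambda>\<mu>. feval \<mu> F = TTrue) \<Omega>"

definition join :: "('v, 'i, 'l) mset_map \<Rightarrow> ('v, 'i, 'l) mset_map \<Rightarrow> ('v, 'i, 'l) mset_map" where
  "join \<Omega>1 \<Omega>2 = (\<Sum>\<mu>1 \<in># \<Omega>1. \<Sum>\<mu>2 \<in># \<Omega>2.
      (if compatible \<mu>1 \<mu>2 then {#\<mu>1 ++ \<mu>2#} else {#}))"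

definition union_m :: "('v, 'i, 'l) mset_map \<Rightarrow> ('v, 'i, 'l) mset_map \<Rightarrow> ('v, 'i, 'l) mset_map" where
  "union_m \<Omega>1 \<Omega>2 = \<Omega>1 + \<Omega>2"

definition diffF :: "('v, 'i, 'l) sformula \<Rightarrow> ('v, 'i, 'l) mset_map \<Rightarrow> ('v, 'i, 'l) mset_map
                     \<Rightarrow> ('v, 'i, 'l) mset_map" where
  "diffF F \<Omega>1 \<Omega>2 = filter_mset (\<lambda>\<mu>1. \<forall>\<mu>2 \<in># \<Omega>2. \<not> compatible \<mu>1 \<mu>2 \<or>
       (compatible \<mu>1 \<mu>2 \<and> feval (\<mu>1 ++ \<mu>2) F = TFalse)) \<Omega>1"

definition leftjoin :: "('v, 'i, 'l) sformula \<Rightarrow> ('v, 'i, 'l) mset_map \<Rightarrow> ('v, 'i, 'l) mset_map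
                        \<Rightarrow> ('v, 'i, 'l) mset_map" where
  "leftjoin F \<Omega>1 \<Omega>2 = union_m (sel F (join \<Omega>1 \<Omega>2)) (diffF F \<Omega>1 \<Omega>2)"

definition sdiff :: "('v, 'i, 'l) mset_map \<Rightarrow> ('v, 'i, 'l) mset_map \<Rightarrow> ('v, 'i, 'l) mset_map" where
  "sdiff \<Omega>1 \<Omega>2 = filter_mset (\<lambda>\<mu>1. \<forall>\<mu>2 \<in># \<Omega>2. \<not> compatible \<mu>1 \<mu>2) \<Omega>1"

datatype ('v, 'i, 'l) core_expr =
    Arg1
  | Arg2
  | Proj "'v set" "('v, 'i, 'l) core_expr"
  | Sel "('v, 'i, 'l) sformula" "('v, 'i, 'l) core_expr"
  | Join "('v, 'i, 'l) core_expr" "('v, 'i, 'l) core_expr"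
  | Union "('v, 'i, 'l) core_expr" "('v, 'i, 'l) core_expr"
  | SDiff "('v, 'i, 'l) core_expr" "('v, 'i, 'l) core_expr"

fun ceval :: "('v, 'i, 'l) core_expr \<Rightarrow> ('v, 'i, 'l) mset_map \<Rightarrow> ('v, 'i, 'l) mset_map
              \<Rightarrow> ('v, 'i, 'l) mset_map" where
  "ceval Arg1 \<Omega>1 \<Omega>2 = \<Omega>1"
| "ceval Arg2 \<Omega>1 \<Omega>2 = \<Omega>2"
| "ceval (Proj W E) \<Omega>1 \<Omega>2 = proj W (ceval E \<Omega>1 \<Omega>2)"
| "ceval (Sel F E) \<Omega>1 \<Omega>2 = sel F (ceval E \<Omega>1 \<Omega>2)"
| "ceval (Join E1 E2) \<Omega>1 \<Omega>2 = join (ceval E1 \<Omega>1 \<Omega>2) (ceval E2 \<Omega>1 \<Omega>2)"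
| "ceval (Union E1 E2) \<Omega>1 \<Omega>2 = union_m (ceval E1 \<Omega>1 \<Omega>2) (ceval E2 \<Omega>1 \<Omega>2)"
| "ceval (SDiff E1 E2) \<Omega>1 \<Omega>2 = sdiff (ceval E1 \<Omega>1 \<Omega>2) (ceval E2 \<Omega>1 \<Omega>2)"

end

theory Submission
  imports Defs
begin

fun fvars :: "('v, 'i, 'l) sformula \<Rightarrow> 'v list" where
  "fvars (EqC x c) = [x]"
| "fvars (EqV x y) = [x, y]"
| "fvars (Bound x) = [x]"
| "fvars (FAnd F G) = fvars F @ fvars G"
| "fvars (FOr F G) = fvars F @ fvars G"
| "fvars (FNot F) = fvars F"

fun ftrue :: "('v, 'i, 'l) sformula \<Rightarrow> ('v, 'i, 'l) sformula"
and ffalse :: "('v, 'i, 'l) sformula \<Rightarrow> ('v, 'i, 'l) sformula" where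
  "ftrue (EqC x c) = FAnd (Bound x) (EqC x c)"
| "ftrue (EqV x y) = FAnd (FAnd (Bound x) (Bound y)) (EqV x y)"
| "ftrue (Bound x) = Bound x"
| "ftrue (FAnd F G) = FAnd (ftrue F) (ftrue G)"
| "ftrue (FOr F G) = FOr (ftrue F) (ftrue G)"
| "ftrue (FNot F) = ffalse F"
| "ffalse (EqC x c) = FAnd (Bound x) (FNot (EqC x c))"
| "ffalse (EqV x y) = FAnd (FAnd (Bound x) (Bound y)) (FNot (EqV x y))"
| "ffalse (Bound x) = FNot (Bound x)"
| "ffalse (FAnd F G) = FOr (ffalse F) (ffalse G)"
| "ffalse (FOr F G) = FAnd (ffalse F) (ffalse G)"
| "ffalse (FNot F) = ftrue F"

lemma ftf: "feval \<mu> (ftrue F) = (if feval \<mu> F = TTrue then TTrue else TFalse) \<and>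
            feval \<mu> (ffalse F) = (if feval \<mu> F = TFalse then TTrue else TFalse)"
proof (induction F)
  case (FNot F) then show ?case by (cases "feval \<mu> F") auto
next
  case (FAnd F1 F2) then show ?case by (cases "feval \<mu> F1"; cases "feval \<mu> F2") auto
next
  case (FOr F1 F2) then show ?case by (cases "feval \<mu> F1"; cases "feval \<mu> F2") auto
qed (auto split: option.splits)

lemma feval_cong: "(\<forall>v\<in>set (fvars F). \<mu> v = \<mu>' v) \<Longrightarrow> feval \<mu> F = feval \<mu>' F"
  by (induction F) (auto simp: domIff)

lemma join_mem: "x \<in># join A B \<longleftrightarrow> (\<exists>a\<in>#A. \<exists>b\<in>#B. compatible a b \<and> x = a ++ b)"
proof (induction A)
  case empty then show ?case by (simp add: join_def)
next
  case (add a A)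
  have "x \<in># (\<Sum>b\<in>#B. if compatible a b then {#a ++ b#} else {#}) \<longleftrightarrow>
        (\<exists>b\<in>#B. compatible a b \<and> x = a ++ b)"
    by (induction B) auto
  then show ?case using add by (auto simp: join_def)
qed

definition GF :: "('v, 'i, 'l) sformula \<Rightarrow> ('v, 'i, 'l) sformula" where
  "GF F = FNot (ffalse F)"

lemma GF_eval: "feval \<mu> (GF F) = TTrue \<longleftrightarrow> feval \<mu> F \<noteq> TFalse"
  using ftf[of \<mu> F] by (simp add: GF_def)

definition Dexp :: "('v, 'i, 'l) sformula \<Rightarrow> ('v, 'i, 'l) sformula \<Rightarrow> ('v, 'i, 'l) core_expr" where
  "Dexp F \<Phi> = SDiff (Sel \<Phi> Arg1) (Sel (GF F) (Join (Sel \<Phi> Arg1) Arg2))"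

fun build :: "('v, 'i, 'l) sformula \<Rightarrow> 'v list \<Rightarrow> ('v, 'i, 'l) sformula \<Rightarrow> ('v, 'i, 'l) core_expr" where
  "build F [] \<Phi> = Dexp F \<Phi>"
| "build F (v # vs) \<Phi> = Union (build F vs (FAnd \<Phi> (Bound v))) (build F vs (FAnd \<Phi> (FNot (Bound v))))"

definition notD where
  "notD F \<Omega>2 \<mu>1 = (\<forall>\<mu>2 \<in># \<Omega>2. \<not> compatible \<mu>1 \<mu>2 \<or> feval (\<mu>1 ++ \<mu>2) F = TFalse)"

lemma compat_add: "compatible \<mu>1 \<mu>2 \<Longrightarrow> compatible \<mu>1 (\<mu>1 ++ \<mu>2)"
  unfolding compatible_def
proof
  fix v assume c: "\<forall>x\<in>dom \<mu>1 \<inter> dom \<mu>2. \<mu>1 x = \<mu>2 x" and v: "v \<in> dom \<mu>1 \<inter> dom (\<mu>1 ++ \<mu>2)"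
  show "\<mu>1 v = (\<mu>1 ++ \<mu>2) v"
  proof (cases "\<mu>2 v")
    case (Some y)
    then have "v \<in> dom \<mu>1 \<inter> dom \<mu>2" using v by auto
    then have "\<mu>1 v = \<mu>2 v" using c by blast
    then show ?thesis by (simp add: map_add_def Some)
  qed (simp add: map_add_def)
qed

lemma compat_add2: "compatible \<mu>1 (\<mu>1' ++ \<mu>2) \<Longrightarrow> compatible \<mu>1 \<mu>2"
  unfolding compatible_def
proof
  fix v assume c: "\<forall>x\<in>dom \<mu>1 \<inter> dom (\<mu>1' ++ \<mu>2). \<mu>1 x = (\<mu>1' ++ \<mu>2) x" and v: "v \<in> dom \<mu>1 \<inter> dom \<mu>2"
  then obtain y where y: "\<mu>2 v = Some y" by auto
  then have "v \<in> dom (\<mu>1' ++ \<mu>2)" by auto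
  then show "\<mu>1 v = \<mu>2 v" using c v y by (auto simp: map_add_def)
qed

lemma Dexp_eval:
  assumes H: "\<And>\<mu> \<mu>' v. feval \<mu> \<Phi> = TTrue \<Longrightarrow> feval \<mu>' \<Phi> = TTrue \<Longrightarrow> v \<in> set (fvars F)
                \<Longrightarrow> (v \<in> dom \<mu> \<longleftrightarrow> v \<in> dom \<mu>')"
  shows "ceval (Dexp F \<Phi>) \<Omega>1 \<Omega>2 = filter_mset (\<lambda>\<mu>. feval \<mu> \<Phi> = TTrue \<and> notD F \<Omega>2 \<mu>) \<Omega>1"
proof -
  have key: "(\<exists>\<nu>\<in># filter_mset (\<lambda>\<mu>. feval \<mu> (GF F) = TTrue)
               (join (filter_mset (\<lambda>\<mu>. feval \<mu> \<Phi> = TTrue) \<Omega>1) \<Omega>2). compatible \<mu>1 \<nu>)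
        \<longleftrightarrow> \<not> notD F \<Omega>2 \<mu>1"
    if m1: "\<mu>1 \<in># \<Omega>1" and p1: "feval \<mu>1 \<Phi> = TTrue" for \<mu>1
  proof
    assume "\<exists>\<nu>\<in># filter_mset (\<lambda>\<mu>. feval \<mu> (GF F) = TTrue)
               (join (filter_mset (\<lambda>\<mu>. feval \<mu> \<Phi> = TTrue) \<Omega>1) \<Omega>2). compatible \<mu>1 \<nu>"
    then obtain \<mu>1' \<mu>2 where a: "\<mu>1' \<in># \<Omega>1" "feval \<mu>1' \<Phi> = TTrue" "\<mu>2 \<in># \<Omega>2"
      "compatible \<mu>1' \<mu>2" "feval (\<mu>1' ++ \<mu>2) F \<noteq> TFalse" "compatible \<mu>1 (\<mu>1' ++ \<mu>2)"
      by (auto simp: join_mem GF_eval)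
    have c: "compatible \<mu>1 \<mu>2"
      using a(6) by (rule compat_add2)
    have "\<forall>v\<in>set (fvars F). (\<mu>1 ++ \<mu>2) v = (\<mu>1' ++ \<mu>2) v"
    proof
      fix v assume v: "v \<in> set (fvars F)"
      show "(\<mu>1 ++ \<mu>2) v = (\<mu>1' ++ \<mu>2) v"
      proof (cases "\<mu>2 v")
        case None
        have "v \<in> dom \<mu>1 \<longleftrightarrow> v \<in> dom \<mu>1'" using H[OF p1 a(2) v] .
        moreover have "\<mu>1 v = \<mu>1' v" if "v \<in> dom \<mu>1" "v \<in> dom \<mu>1'"
        proof -
          have e: "(\<mu>1' ++ \<mu>2) v = \<mu>1' v" using None by (simp add: map_add_def)
          then have vd: "v \<in> dom \<mu>1 \<inter> dom (\<mu>1' ++ \<mu>2)" using that by (auto simp: domIff)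
          have h: "\<forall>x \<in> dom \<mu>1 \<inter> dom (\<mu>1' ++ \<mu>2). \<mu>1 x = (\<mu>1' ++ \<mu>2) x"
            using a(6) by (simp only: compatible_def)
          have "\<mu>1 v = (\<mu>1' ++ \<mu>2) v" using bspec[OF h vd] .
          then show ?thesis using e by simp
        qed
        ultimately show ?thesis using None by (auto simp: map_add_def domIff)
      qed (simp add: map_add_def)
    qed
    then have "feval (\<mu>1 ++ \<mu>2) F = feval (\<mu>1' ++ \<mu>2) F" by (rule feval_cong)
    then show "\<not> notD F \<Omega>2 \<mu>1" using a c unfolding notD_def by auto
  next
    assume "\<not> notD F \<Omega>2 \<mu>1"
    then obtain \<mu>2 where "\<mu>2 \<in># \<Omega>2" "compatible \<mu>1 \<mu>2" "feval (\<mu>1 ++ \<mu>2) F \<noteq> TFalse"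
      unfolding notD_def by auto
    then show "\<exists>\<nu>\<in># filter_mset (\<lambda>\<mu>. feval \<mu> (GF F) = TTrue)
               (join (filter_mset (\<lambda>\<mu>. feval \<mu> \<Phi> = TTrue) \<Omega>1) \<Omega>2). compatible \<mu>1 \<nu>"
    proof -
      assume b: "\<mu>2 \<in># \<Omega>2" "compatible \<mu>1 \<mu>2" "feval (\<mu>1 ++ \<mu>2) F \<noteq> TFalse"
      have f: "\<mu>1 \<in># filter_mset (\<lambda>\<mu>. feval \<mu> \<Phi> = TTrue) \<Omega>1" using m1 p1 by simp
      have "\<mu>1 ++ \<mu>2 \<in># join (filter_mset (\<lambda>\<mu>. feval \<mu> \<Phi> = TTrue) \<Omega>1) \<Omega>2"
        unfolding join_mem using f b by blast
      then have "\<mu>1 ++ \<mu>2 \<in># filter_mset (\<lambda>\<mu>. feval \<mu> (GF F) = TTrue)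
               (join (filter_mset (\<lambda>\<mu>. feval \<mu> \<Phi> = TTrue) \<Omega>1) \<Omega>2)"
        using b by (simp add: GF_eval)
      then show ?thesis using compat_add[OF b(2)] by blast
    qed
  qed
  show ?thesis
    unfolding Dexp_def
    apply (simp add: sdiff_def sel_def filter_filter_mset)
    apply (rule filter_mset_cong0)
    subgoal for x using key[of x] by auto
    done
qed

lemma and_bound: "feval \<mu> (FAnd \<Phi> (Bound v)) = TTrue \<longleftrightarrow> feval \<mu> \<Phi> = TTrue \<and> v \<in> dom \<mu>"
  by (cases "feval \<mu> \<Phi>") (auto simp del: feval.simps(3) simp: feval.simps(3)[of \<mu> v])

lemma and_nbound: "feval \<mu> (FAnd \<Phi> (FNot (Bound v))) = TTrue \<longleftrightarrow> feval \<mu> \<Phi> = TTrue \<and> v \<notin> dom \<mu>"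
  by (cases "feval \<mu> \<Phi>") auto

lemma build_eval:
  assumes "\<And>\<mu> \<mu>' v. feval \<mu> \<Phi> = TTrue \<Longrightarrow> feval \<mu>' \<Phi> = TTrue \<Longrightarrow> v \<in> set (fvars F) - set vs
                \<Longrightarrow> (v \<in> dom \<mu> \<longleftrightarrow> v \<in> dom \<mu>')"
  shows "ceval (build F vs \<Phi>) \<Omega>1 \<Omega>2 = filter_mset (\<lambda>\<mu>. feval \<mu> \<Phi> = TTrue \<and> notD F \<Omega>2 \<mu>) \<Omega>1"
  using assms
proof (induction vs arbitrary: \<Phi>)
  case Nil
  have "ceval (Dexp F \<Phi>) \<Omega>1 \<Omega>2 = filter_mset (\<lambda>\<mu>. feval \<mu> \<Phi> = TTrue \<and> notD F \<Omega>2 \<mu>) \<Omega>1"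
  proof (rule Dexp_eval)
    fix \<mu> \<mu>' v
    assume "feval \<mu> \<Phi> = TTrue" "feval \<mu>' \<Phi> = TTrue" "v \<in> set (fvars F)"
    then show "v \<in> dom \<mu> \<longleftrightarrow> v \<in> dom \<mu>'" using Nil.prems[of \<mu> \<mu>' v] by simp
  qed
  then show ?case by (simp only: build.simps)
next
  case (Cons v vs)
  have 1: "ceval (build F vs (FAnd \<Phi> (Bound v))) \<Omega>1 \<Omega>2 =
     filter_mset (\<lambda>\<mu>. feval \<mu> (FAnd \<Phi> (Bound v)) = TTrue \<and> notD F \<Omega>2 \<mu>) \<Omega>1"
  proof (rule Cons.IH)
    fix \<mu> \<mu>' w
    assume "feval \<mu> (FAnd \<Phi> (Bound v)) = TTrue" "feval \<mu>' (FAnd \<Phi> (Bound v)) = TTrue"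
      "w \<in> set (fvars F) - set vs"
    then show "w \<in> dom \<mu> \<longleftrightarrow> w \<in> dom \<mu>'"
      using Cons.prems[of \<mu> \<mu>' w] unfolding and_bound by auto
  qed
  have 2: "ceval (build F vs (FAnd \<Phi> (FNot (Bound v)))) \<Omega>1 \<Omega>2 =
     filter_mset (\<lambda>\<mu>. feval \<mu> (FAnd \<Phi> (FNot (Bound v))) = TTrue \<and> notD F \<Omega>2 \<mu>) \<Omega>1"
  proof (rule Cons.IH)
    fix \<mu> \<mu>' w
    assume "feval \<mu> (FAnd \<Phi> (FNot (Bound v))) = TTrue" "feval \<mu>' (FAnd \<Phi> (FNot (Bound v))) = TTrue"
      "w \<in> set (fvars F) - set vs"
    then show "w \<in> dom \<mu> \<longleftrightarrow> w \<in> dom \<mu>'"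
      using Cons.prems[of \<mu> \<mu>' w] unfolding and_nbound by auto
  qed
  let ?M = "filter_mset (\<lambda>\<mu>. feval \<mu> \<Phi> = TTrue \<and> notD F \<Omega>2 \<mu>) \<Omega>1"
  have p: "?M = filter_mset (\<lambda>\<mu>. v \<in> dom \<mu>) ?M + filter_mset (\<lambda>\<mu>. \<not> v \<in> dom \<mu>) ?M"
    by (rule multiset_partition)
  have 3: "filter_mset (\<lambda>\<mu>. v \<in> dom \<mu>) ?M =
     filter_mset (\<lambda>\<mu>. feval \<mu> (FAnd \<Phi> (Bound v)) = TTrue \<and> notD F \<Omega>2 \<mu>) \<Omega>1"
    unfolding filter_filter_mset and_bound by (rule filter_mset_cong0) blast
  have 4: "filter_mset (\<lambda>\<mu>. \<not> v \<in> dom \<mu>) ?M =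
     filter_mset (\<lambda>\<mu>. feval \<mu> (FAnd \<Phi> (FNot (Bound v))) = TTrue \<and> notD F \<Omega>2 \<mu>) \<Omega>1"
    unfolding filter_filter_mset and_nbound by (rule filter_mset_cong0) blast
  show ?case
    using p 1 2 3 4 by (simp only: build.simps ceval.simps union_m_def)
qed

theorem lemma2:
  assumes "infinite (UNIV :: 'i set)" and "infinite (UNIV :: 'l set)"
    and "infinite (UNIV :: 'v set)"
  shows "\<forall>F :: ('v, 'i, 'l) sformula. \<exists>E :: ('v, 'i, 'l) core_expr.
           \<forall>\<Omega>1 \<Omega>2. ceval E \<Omega>1 \<Omega>2 = leftjoin F \<Omega>1 \<Omega>2"
proof
  fix F :: "('v, 'i, 'l) sformula"
  define x :: 'v where "x = undefined"
  define \<Phi>0 :: "('v, 'i, 'l) sformula" where "\<Phi>0 = FOr (Bound x) (FNot (Bound x))"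
  have t: "feval \<mu> \<Phi>0 = TTrue" for \<mu> by (simp add: \<Phi>0_def)
  show "\<exists>E :: ('v, 'i, 'l) core_expr. \<forall>\<Omega>1 \<Omega>2. ceval E \<Omega>1 \<Omega>2 = leftjoin F \<Omega>1 \<Omega>2"
  proof (intro exI allI)
    fix \<Omega>1 \<Omega>2
    have "ceval (build F (fvars F) \<Phi>0) \<Omega>1 \<Omega>2 = filter_mset (\<lambda>\<mu>. feval \<mu> \<Phi>0 = TTrue \<and> notD F \<Omega>2 \<mu>) \<Omega>1"
    proof (rule build_eval)
      fix \<mu> \<mu>' v
      assume "v \<in> set (fvars F) - set (fvars F)"
      then show "v \<in> dom \<mu> \<longleftrightarrow> v \<in> dom \<mu>'" by blast
    qed
    also have "\<dots> = diffF F \<Omega>1 \<Omega>2"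
      unfolding diffF_def notD_def by (rule filter_mset_cong0) (simp only: t, blast)
    finally show "ceval (Union (Sel F (Join Arg1 Arg2)) (build F (fvars F) \<Phi>0)) \<Omega>1 \<Omega>2 = leftjoin F \<Omega>1 \<Omega>2"
      by (simp add: leftjoin_def)
  qed
qed

end
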